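(* Let $N_1,N_2\ge1$ and $m_1\ge1$, $m_2\ge1$ be integers with $m_1+m_2<N_1N_2$. Let $A=A(N_1,N_2,m_1,m_2)$ be the set of $N_1\times N_2$ matrices $X=(x_{ij})$, $i\in\mathbb{Z}/N_1\mathbb{Z}$, $j\in\mathbb{Z}/N_2\mathbb{Z}$, having exactly $m_1$ entries equal to $1$, exactly $m_2$ entries equal to $2$, and all other entries equal to $0$. Define the unary operation $f:A\to A$ by $f(X)=Y(U(X))$, where: (i) $U(X)=(u_{ij})$ is obtained from $X$ by moving every entry $1$ one position to the right cyclically whenever the position to its right is $0$: namely $u_{ij}=1$ if ($x_{ij}=1$ and $x_{i,j+1}\neq 0$) or ($x_{ij}=0$ and $x_{i,j-1}=1$); $u_{ij}=2$ if $x_{ij}=2$; and $u_{ij}=0$ otherwise (indices $j\pm1$ modulo $N_2$); (ii) $Y(U)=(y_{ij})$ is obtained from $U$ by moving every entry $2$ from position $(i,j)$ to position $(i+1,j)$ (modulo $N_1$) whenever $u_{i+1,j}=0$: namely $y_{ij}=2$ if ($u_{ij}=2$ and $u_{i+1,j}\neq0$) or ($u_{ij}=0$ and $u_{i-1,j}=2$); $y_{ij}=1$ if $u_{ij}=1$; and $y_{ij}=0$ otherwise. Let $B\subseteq A$ be the set of matrices $X$ such that every entry $1$ of $X$ has a $0$ immediately to its right in $X$ (i.e. $x_{ij}=1\Rightarrow x_{i,j+1}=0$) and every entry $2$ of $U(X)$ has a $0$ at the next row position in $U(X)$ (i.e. $u_{ij}=2\Rightarrow u_{i+1,j}=0$).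 Let $f^1=f$, $f^t=f\circ f^{t-1}$, and let $C\subseteq A$ be the set of matrices $X$ for which there exists $t_0$ such that $f^t(X)\in B$ for all $t\ge t_0$. If the greatest common divisor of $N_1$ and $N_2$ is less than $3$, then no matrix belongs to $C$ (i.e. $C=\emptyset$).
   Context: Interpretation: $X\in A$ encodes a state of a deterministic Biham--Middleton--Levine type traffic system on an $N_1\times N_2$ torus, with $1$ = particle of the first type (moving along rows), $2$ = particle of the second type (moving along columns), $0$ = vacant cell; $f$ is one time step (first-type particles move, then second-type particles move); $B$ is the set of states in which every particle moves; $C$ is the set of states that eventually stay in free movement forever. *)

theory Defs
  imports Main
begin

text \<open>A state is a function X :: nat => nat => nat; only the entries with
  row index i < N1 and column index j < N2 are meaningful (indices taken in
  Z/N1 x Z/N2 represented by 0..N1-1 and 0..N2-1); entries outside are 0.\<close>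

type_synonym state = "nat \<Rightarrow> nat \<Rightarrow> nat"

definition bml_A :: "nat \<Rightarrow> nat \<Rightarrow> nat \<Rightarrow> nat \<Rightarrow> state set" where
  "bml_A N1 N2 m1 m2 = {X.
     (\<forall>i j. \<not> (i < N1 \<and> j < N2) \<longrightarrow> X i j = 0) \<and>
     (\<forall>i<N1. \<forall>j<N2. X i j \<in> {0, 1, 2}) \<and>
     card {(i, j). i < N1 \<and> j < N2 \<and> X i j = 1} = m1 \<and>
     card {(i, j). i < N1 \<and> j < N2 \<and> X i j = 2} = m2}"

definition bml_U :: "nat \<Rightarrow> nat \<Rightarrow> state \<Rightarrow> state" where
  "bml_U N1 N2 X = (\<lambda>i j.
     if i < N1 \<and> j < N2 then
       (if (X i j = 1 \<and> X i ((j + 1) mod N2) \<noteq> 0) \<or>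
           (X i j = 0 \<and> X i ((j + N2 - 1) mod N2) = 1) then 1
        else if X i j = 2 then 2 else 0)
     else 0)"

definition bml_Y :: "nat \<Rightarrow> nat \<Rightarrow> state \<Rightarrow> state" where
  "bml_Y N1 N2 U = (\<lambda>i j.
     if i < N1 \<and> j < N2 then
       (if (U i j = 2 \<and> U ((i + 1) mod N1) j \<noteq> 0) \<or>
           (U i j = 0 \<and> U ((i + N1 - 1) mod N1) j = 2) then 2
        else if U i j = 1 then 1 else 0)
     else 0)"

definition bml_f :: "nat \<Rightarrow> nat \<Rightarrow> state \<Rightarrow> state" where
  "bml_f N1 N2 X = bml_Y N1 N2 (bml_U N1 N2 X)"

definition bml_B :: "nat \<Rightarrow> nat \<Rightarrow> nat \<Rightarrow> nat \<Rightarrow> state set" where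
  "bml_B N1 N2 m1 m2 = {X \<in> bml_A N1 N2 m1 m2.
     (\<forall>i<N1. \<forall>j<N2. X i j = 1 \<longrightarrow> X i ((j + 1) mod N2) = 0) \<and>
     (\<forall>i<N1. \<forall>j<N2. bml_U N1 N2 X i j = 2 \<longrightarrow>
                      bml_U N1 N2 X ((i + 1) mod N1) j = 0)}"

definition bml_C :: "nat \<Rightarrow> nat \<Rightarrow> nat \<Rightarrow> nat \<Rightarrow> state set" where
  "bml_C N1 N2 m1 m2 = {X \<in> bml_A N1 N2 m1 m2.
     \<exists>t0. \<forall>t\<ge>t0. (bml_f N1 N2 ^^ t) X \<in> bml_B N1 N2 m1 m2}"

end

theory Submission
  imports Defs
begin

lemma crt_ex:
  fixes N1 N2 :: nat and r1 r2 :: int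
  assumes "N1 \<ge> 1" "N2 \<ge> 1" "int (gcd N1 N2) dvd (r1 - r2)"
  shows "\<exists>s::nat. int s mod int N1 = r1 mod int N1 \<and> int s mod int N2 = r2 mod int N2"
proof -
  obtain u v :: int where uv: "u * int N1 + v * int N2 = gcd (int N1) (int N2)"
    using bezout_int by blast
  have g: "gcd (int N1) (int N2) = int (gcd N1 N2)" by simp
  obtain q where q: "r1 - r2 = int (gcd N1 N2) * q" using assms(3) by (auto elim: dvdE)
  define s0 where "s0 = r1 - int N1 * u * q"
  have s0b: "s0 = r2 + int N2 * v * q"
    using uv q g unfolding s0_def by (simp add: algebra_simps) (metis distrib_left mult.assoc mult.commute)
  define M where "M = int N1 * int N2"
  have Mpos: "M > 0" using assms unfolding M_def by simp
  define s where "s = nat (s0 mod M)"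
  have si: "int s = s0 mod M" unfolding s_def using Mpos by simp
  have 1: "int s mod int N1 = s0 mod int N1" unfolding si M_def
    by (simp add: mod_mod_cancel)
  have 2: "int s mod int N2 = s0 mod int N2" unfolding si M_def
    by (metis dvd_triv_right mod_mod_cancel)
  have 3: "s0 mod int N1 = r1 mod int N1" unfolding s0_def
    by (metis mod_mult_self2 diff_conv_add_uminus minus_mult_left mult.assoc mult.commute)
  have 4: "s0 mod int N2 = r2 mod int N2" unfolding s0b
    by (metis mod_mult_self2 mult.assoc mult.commute)
  show ?thesis using 1 2 3 4 by (intro exI[of _ s]) simp
qed

lemma modh: "((c::int) + x mod N + e) mod N = (c + x + e) mod N"
  by (metis add.commute add.left_commute mod_add_right_eq)

lemma step1:
  assumes W: "W \<in> bml_B N1 N2 m1 m2" and i: "i < N1" and j: "j < N2" and w: "W i j = 1"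
  shows "bml_U N1 N2 W i ((j+1) mod N2) = 1" "bml_f N1 N2 W i ((j+1) mod N2) = 1"
proof -
  have N2: "N2 > 0" using j by simp
  have z: "W i ((j+1) mod N2) = 0" using W i j w unfolding bml_B_def by auto
  have idx: "((j + 1) mod N2 + N2 - 1) mod N2 = j"
  proof (cases "j + 1 = N2")
    case True then show ?thesis using j by simp
  next
    case False then have "j + 1 < N2" using j by simp
    then show ?thesis by simp
  qed
  show U: "bml_U N1 N2 W i ((j+1) mod N2) = 1"
    unfolding bml_U_def using z idx w i N2 by simp
  show "bml_f N1 N2 W i ((j+1) mod N2) = 1"
    unfolding bml_f_def using U i N2 unfolding bml_Y_def by simp
qed

lemma step2:
  assumes W: "W \<in> bml_B N1 N2 m1 m2" and i: "i < N1" and j: "j < N2" and w: "W i j = 2"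
  shows "bml_U N1 N2 W i j = 2" "bml_f N1 N2 W ((i+1) mod N1) j = 2"
proof -
  have N1: "N1 > 0" using i by simp
  show U: "bml_U N1 N2 W i j = 2" unfolding bml_U_def using w i j by simp
  have z: "bml_U N1 N2 W ((i+1) mod N1) j = 0" using W i j U unfolding bml_B_def by auto
  have idx: "((i + 1) mod N1 + N1 - 1) mod N1 = i"
  proof (cases "i + 1 = N1")
    case True then show ?thesis using i by simp
  next
    case False then have "i + 1 < N1" using i by simp
    then show ?thesis by simp
  qed
  show "bml_f N1 N2 W ((i+1) mod N1) j = 2"
    unfolding bml_f_def bml_Y_def using z idx U j N1 by simp
qed

lemma track:
  assumes allB: "\<forall>s. (bml_f N1 N2 ^^ s) Z \<in> bml_B N1 N2 m1 m2"
    and a: "a < N1" and b: "b < N2" and c: "c < N1" and d: "d < N2"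
    and z1: "Z a b = 1" and z2: "Z c d = 2"
  shows "(bml_f N1 N2 ^^ s) Z a ((b + s) mod N2) = 1 \<and>
         (bml_f N1 N2 ^^ s) Z ((c + s) mod N1) d = 2"
proof (induction s)
  case 0
  then show ?case using z1 z2 a b c d by simp
next
  case (Suc s)
  have W: "(bml_f N1 N2 ^^ s) Z \<in> bml_B N1 N2 m1 m2" using allB by blast
  have N1: "N1 > 0" and N2: "N2 > 0" using a b by auto
  have e1: "((b + s) mod N2 + 1) mod N2 = (b + Suc s) mod N2" by (simp add: mod_Suc_eq)
  have e2: "((c + s) mod N1 + 1) mod N1 = (c + Suc s) mod N1" by (simp add: mod_Suc_eq)
  show ?case
    using step1(2)[OF W a _ conjunct1[OF Suc.IH]] step2(2)[OF W _ d conjunct2[OF Suc.IH]] N1 N2 e1 e2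
    by simp
qed

theorem theorem2:
  fixes N1 N2 m1 m2 :: nat
  assumes "N1 \<ge> 1" and "N2 \<ge> 1" and "m1 \<ge> 1" and "m2 \<ge> 1"
    and "m1 + m2 < N1 * N2"
    and "gcd N1 N2 < 3"
  shows "bml_C N1 N2 m1 m2 = {}"
proof (rule ccontr)
  assume "bml_C N1 N2 m1 m2 \<noteq> {}"
  then obtain X t0 where XA: "X \<in> bml_A N1 N2 m1 m2"
    and tB: "\<forall>t\<ge>t0. (bml_f N1 N2 ^^ t) X \<in> bml_B N1 N2 m1 m2"
    unfolding bml_C_def by blast
  define Z where "Z = (bml_f N1 N2 ^^ t0) X"
  have allB: "\<forall>s. (bml_f N1 N2 ^^ s) Z \<in> bml_B N1 N2 m1 m2"
  proof
    fix s
    have "(bml_f N1 N2 ^^ s) Z = (bml_f N1 N2 ^^ (s + t0)) X"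
      unfolding Z_def by (simp add: funpow_add)
    then show "(bml_f N1 N2 ^^ s) Z \<in> bml_B N1 N2 m1 m2" using tB by simp
  qed
  have ZA: "Z \<in> bml_A N1 N2 m1 m2" using allB[rule_format, of 0] unfolding bml_B_def by simp
  have c1: "card {(i, j). i < N1 \<and> j < N2 \<and> Z i j = 1} = m1" using ZA unfolding bml_A_def by blast
  have "{(i, j). i < N1 \<and> j < N2 \<and> Z i j = 1} \<noteq> {}"
  proof
    assume h: "{(i, j). i < N1 \<and> j < N2 \<and> Z i j = 1} = {}"
    have "m1 = 0" using c1 by (simp only: h card.empty)
    then show False using assms(3) by simp
  qed
  then obtain a b where ab: "a < N1" "b < N2" "Z a b = 1" by blast
  have c2: "card {(i, j). i < N1 \<and> j < N2 \<and> Z i j = 2} = m2" using ZA unfolding bml_A_def by blast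
  have "{(i, j). i < N1 \<and> j < N2 \<and> Z i j = 2} \<noteq> {}"
  proof
    assume h: "{(i, j). i < N1 \<and> j < N2 \<and> Z i j = 2} = {}"
    have "m2 = 0" using c2 by (simp only: h card.empty)
    then show False using assms(4) by simp
  qed
  then obtain c d where cd: "c < N1" "d < N2" "Z c d = 2" by blast
  define g where "g = gcd N1 N2"
  have gpos: "g \<ge> 1" unfolding g_def using assms(1) by (simp add: Suc_le_eq)
  obtain e :: nat where e: "e \<le> 1" "int g dvd ((int a - int c - int e) - (int d - int b - 1))"
  proof (cases "int g dvd ((int a - int c) - (int d - int b - 1))")
    case True then show ?thesis using that[of 0] by simp
  next
    case False
    have "g = 1 \<or> g = 2" using gpos assms(6) unfolding g_def by linarith
    then have "int g dvd ((int a - int c - 1) - (int d - int b - 1))"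
    proof
      assume "g = 1" then show ?thesis by simp
    next
      assume g2: "g = 2"
      then have "\<not> 2 dvd ((int a - int c) - (int d - int b - 1))" using False by simp
      then have "2 dvd ((int a - int c - 1) - (int d - int b - 1))" by presburger
      then show ?thesis using g2 by simp
    qed
    then show ?thesis using that[of 1] by simp
  qed
  obtain s :: nat where s: "int s mod int N1 = (int a - int c - int e) mod int N1"
    "int s mod int N2 = (int d - int b - 1) mod int N2"
    using crt_ex[OF assms(1,2)] e(2) unfolding g_def by blast
  have pos1: "(c + s + e) mod N1 = a"
  proof -
    have "int ((c + s + e) mod N1) = (int c + int s + int e) mod int N1" by (simp add: zmod_int)
    also have "\<dots> = (int c + int s mod int N1 + int e) mod int N1"
      by (metis add.commute add.left_commute mod_add_right_eq)
    also have "\<dots> = (int c + (int a - int c - int e) mod int N1 + int e) mod int N1" using s(1) by simp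
    also have "\<dots> = int a mod int N1" by (simp only: modh) simp
    also have "\<dots> = int a" using ab(1) by simp
    finally show ?thesis by linarith
  qed
  have pos2: "(b + s + 1) mod N2 = d"
  proof -
    have "int ((b + s + 1) mod N2) = (int b + int s + 1) mod int N2" by (simp add: zmod_int ac_simps)
    also have "\<dots> = (int b + int s mod int N2 + 1) mod int N2"
      by (metis add.commute add.left_commute mod_add_right_eq)
    also have "\<dots> = (int b + (int d - int b - 1) mod int N2 + 1) mod int N2" using s(2) by simp
    also have "\<dots> = int d mod int N2" by (simp only: modh) simp
    also have "\<dots> = int d" using cd(2) by simp
    finally show ?thesis by linarith
  qed
  define W where "W = (bml_f N1 N2 ^^ s) Z"
  have WB: "W \<in> bml_B N1 N2 m1 m2" using allB W_def by simp
  have tr: "W a ((b + s) mod N2) = 1" "W ((c + s) mod N1) d = 2"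
    using track[OF allB ab(1,2) cd(1,2) ab(3) cd(3), of s] unfolding W_def by auto
  have N1: "N1 > 0" and N2: "N2 > 0" using assms by auto
  have jd: "((b + s) mod N2 + 1) mod N2 = d" using pos2 by (simp add: mod_Suc_eq)
  show False
  proof (cases "e = 0")
    case True
    then have "(c + s) mod N1 = a" using pos1 by simp
    then have "W a d = 2" using tr by simp
    moreover have "W a d = 0"
    proof -
      have B1: "\<forall>i<N1. \<forall>j<N2. W i j = 1 \<longrightarrow> W i ((j + 1) mod N2) = 0"
        using WB unfolding bml_B_def by blast
      have "(b + s) mod N2 < N2" using N2 by simp
      then have "W a (((b + s) mod N2 + 1) mod N2) = 0" using B1 ab(1) tr(1) by blast
      then show ?thesis using jd by simp
    qed
    ultimately show False by simp
  next
    case False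
    then have e1: "e = 1" using e(1) by simp
    have ia: "((c + s) mod N1 + 1) mod N1 = a" using pos1 e1 by (simp add: mod_Suc_eq)
    have U1: "bml_U N1 N2 W a d = 1"
      using step1(1)[OF WB ab(1) _ tr(1)] N2 jd by simp
    have U2: "bml_U N1 N2 W ((c + s) mod N1) d = 2"
      using step2(1)[OF WB _ cd(2) tr(2)] N1 by simp
    have B2: "\<forall>i<N1. \<forall>j<N2. bml_U N1 N2 W i j = 2 \<longrightarrow> bml_U N1 N2 W ((i + 1) mod N1) j = 0"
      using WB unfolding bml_B_def by blast
    have "(c + s) mod N1 < N1" using N1 by simp
    then have "bml_U N1 N2 W (((c + s) mod N1 + 1) mod N1) d = 0" using B2 cd(2) U2 by blast
    then have "bml_U N1 N2 W a d = 0" using ia by simp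
    then show False using U1 by simp
  qed
qed

end
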